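(* Let $(X,d_X)$ be a discrete countable metric space, $Y=X\times\mathbb N$, and let $d_1$ be the metric on $X\sqcup Y=X\times\overline{\mathbb N}$ given by $d_1(x_n,y_m)=d_X(x,y)+|n-m|$ for $x,y\in X$, $n,m\in\overline{\mathbb N}$. Then, under the identification $T\leftrightarrow(T_n)_{n\in\mathbb N}$, $M_{X\times\mathbb N,d_1}$ coincides with the standard Hilbert $C^*$-module $\ell_2(C^*_u(X))$.
   Context: $\overline{\mathbb N}=\mathbb N\cup\{0\}$; $x_n$ denotes $(x,n)\in X\times\overline{\mathbb N}$, $X_n=X\times\{n\}$, and $X_0$ is identified with $X$. $H_Z=\ell^2(Z)$ with standard basis. $C^*_u(X)$ is the norm closure in $\mathbb B(H_X)$ of bounded finite-propagation operators (propagation at most $L$: $(\delta_x,T\delta_y)=0$ whenever $d_X(x,y)\ge L$). For a metric $d$ on $X\sqcup Y$ extending $d_X$, $M_{Y,d}$ is the norm closure in $\mathbb B(H_X,H_Y)$ of bounded operators $T:H_X\to H_Y$ of finite propagation (there is $L$ with $(\delta_y,T\delta_x)=0$ whenever $d(x,y)\ge L$). Here $H_{X\times\mathbb N}=\bigoplus_{n\ge1}H_{X_n}$; $Q_n$ is the projection onto $H_{X_n}$, and $T_n=Q_nT$ is regarded as an operator on $H_X$ via $H_{X_n}\cong H_X$, $\delta_{x_n}\leftrightarrow\delta_x$. For a $C^*$-algebra $A$, $\ell_2(A)$ is the Hilbert $A$-module of sequences $(a_n)$ in $A$ with $\sum_n a_n^*a_n$ norm convergent, with inner product $\langle(a_n),(b_n)\rangle=\sum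 a_n^*b_n$. *)

theory Defs
  imports "HOL-Analysis.Analysis" "HOL-Library.Countable"
begin

text \<open>Operators between l2 spaces are represented by their matrices:
  a matrix T :: 'j \<Rightarrow> 'i \<Rightarrow> complex represents the operator H_I \<rightarrow> H_J with
  (delta_j, T delta_i) = T j i.\<close>

definition is_metric :: "('a \<Rightarrow> 'a \<Rightarrow> real) \<Rightarrow> bool" where
  "is_metric d \<longleftrightarrow> (\<forall>x y. 0 \<le> d x y) \<and> (\<forall>x y. d x y = 0 \<longleftrightarrow> x = y)
     \<and> (\<forall>x y. d x y = d y x) \<and> (\<forall>x y z. d x z \<le> d x y + d y z)"

definition discrete_metric :: "('a \<Rightarrow> 'a \<Rightarrow> real) \<Rightarrow> bool" where
  "discrete_metric d \<longleftrightarrow> (\<forall>x. \<exists>e>0. \<forall>y. d x y < e \<longrightarrow> y = x)"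

definition form_values :: "('j \<Rightarrow> 'i \<Rightarrow> complex) \<Rightarrow> real set" where
  "form_values T = {cmod (\<Sum>j\<in>F. \<Sum>i\<in>G. cnj (w j) * T j i * v i) | F G w v.
      finite F \<and> finite G \<and> (\<Sum>j\<in>F. (cmod (w j))\<^sup>2) \<le> 1 \<and> (\<Sum>i\<in>G. (cmod (v i))\<^sup>2) \<le> 1}"

definition bounded_op :: "('j \<Rightarrow> 'i \<Rightarrow> complex) \<Rightarrow> bool" where
  "bounded_op T \<longleftrightarrow> bdd_above (form_values T)"

definition opnorm :: "('j \<Rightarrow> 'i \<Rightarrow> complex) \<Rightarrow> real" where
  "opnorm T = Sup (form_values T)"

definition madj :: "('j \<Rightarrow> 'i \<Rightarrow> complex) \<Rightarrow> ('i \<Rightarrow> 'j \<Rightarrow> complex)" where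
  "madj T = (\<lambda>i j. cnj (T j i))"

definition mmult :: "('k \<Rightarrow> 'j \<Rightarrow> complex) \<Rightarrow> ('j \<Rightarrow> 'i \<Rightarrow> complex) \<Rightarrow> ('k \<Rightarrow> 'i \<Rightarrow> complex)" where
  "mmult A B = (\<lambda>k i. infsum (\<lambda>j. A k j * B j i) UNIV)"

definition finite_prop :: "('j \<Rightarrow> 'i \<Rightarrow> real) \<Rightarrow> ('j \<Rightarrow> 'i \<Rightarrow> complex) \<Rightarrow> bool" where
  "finite_prop dist' T \<longleftrightarrow> (\<exists>L. \<forall>j i. dist' j i \<ge> L \<longrightarrow> T j i = 0)"

definition norm_closure_fp :: "('j \<Rightarrow> 'i \<Rightarrow> real) \<Rightarrow> ('j \<Rightarrow> 'i \<Rightarrow> complex) set" where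
  "norm_closure_fp dist' = {T. bounded_op T \<and> (\<forall>e>0. \<exists>S. bounded_op S \<and> finite_prop dist' S
       \<and> opnorm (\<lambda>j i. T j i - S j i) < e)}"

definition uniform_roe :: "('a \<Rightarrow> 'a \<Rightarrow> real) \<Rightarrow> ('a \<Rightarrow> 'a \<Rightarrow> complex) set" where
  "uniform_roe d = norm_closure_fp d"

text \<open>The metric d_1 on X \<times> Nbar (nat includes 0), x_n, y_m \<mapsto> d(x,y) + |n - m|.\<close>
definition d1 :: "('a \<Rightarrow> 'a \<Rightarrow> real) \<Rightarrow> ('a \<times> nat) \<Rightarrow> ('a \<times> nat) \<Rightarrow> real" where
  "d1 d p q = d (fst p) (fst q) + \<bar>real (snd p) - real (snd q)\<bar>"

text \<open>Y = X \<times> N with N = {1,2,...}: the index (y,k) of H_Y stands for y_{k+1}.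
  M_{Y,d1}: matrices (y,k),x of operators H_X \<rightarrow> H_Y.\<close>
definition M_Y_d1 :: "('a \<Rightarrow> 'a \<Rightarrow> real) \<Rightarrow> (('a \<times> nat) \<Rightarrow> 'a \<Rightarrow> complex) set" where
  "M_Y_d1 d = norm_closure_fp (\<lambda>(y, k) x. d1 d (y, Suc k) (x, 0))"

text \<open>T_n = Q_n T regarded as an operator on H_X (here n = k+1).\<close>
definition slice :: "(('a \<times> nat) \<Rightarrow> 'a \<Rightarrow> complex) \<Rightarrow> nat \<Rightarrow> ('a \<Rightarrow> 'a \<Rightarrow> complex)" where
  "slice T k = (\<lambda>y x. T (y, k) x)"

definition ell2_module :: "('a \<Rightarrow> 'a \<Rightarrow> complex) set \<Rightarrow> (nat \<Rightarrow> ('a \<Rightarrow> 'a \<Rightarrow> complex)) set" where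
  "ell2_module A = {a. (\<forall>n. a n \<in> A) \<and>
     (\<exists>L\<in>A. (\<lambda>N. opnorm (\<lambda>x z. (\<Sum>n<N. mmult (madj (a n)) (a n) x z) - L x z)) \<longlonglongrightarrow> 0)}"

end

theory Submission
  imports Defs
begin

definition fv :: "('j \<Rightarrow> 'i \<Rightarrow> complex) \<Rightarrow> 'j set \<Rightarrow> 'i set \<Rightarrow> ('j \<Rightarrow> complex) \<Rightarrow> ('i \<Rightarrow> complex) \<Rightarrow> complex" where
  "fv T F G w v = (\<Sum>j\<in>F. \<Sum>i\<in>G. cnj (w j) * T j i * v i)"

definition nrm2 :: "'j set \<Rightarrow> ('j \<Rightarrow> complex) \<Rightarrow> real" where
  "nrm2 F w = (\<Sum>j\<in>F. (cmod (w j))\<^sup>2)"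

definition app :: "('j \<Rightarrow> 'i \<Rightarrow> complex) \<Rightarrow> 'i set \<Rightarrow> ('i \<Rightarrow> complex) \<Rightarrow> 'j \<Rightarrow> complex" where
  "app T G v = (\<lambda>j. \<Sum>i\<in>G. T j i * v i)"

lemma form_values_eq:
  "form_values T = {cmod (fv T F G w v) | F G w v. finite F \<and> finite G \<and> nrm2 F w \<le> 1 \<and> nrm2 G v \<le> 1}"
  unfolding form_values_def fv_def nrm2_def by simp

lemma nrm2_nonneg: "0 \<le> nrm2 F w"
  unfolding nrm2_def by (simp add: sum_nonneg)

lemma cnj_self: "cnj z * z = complex_of_real ((cmod z)\<^sup>2)"
  by (metis complex_norm_square mult.commute)

lemma fv_app: "fv T F G w v = (\<Sum>j\<in>F. cnj (w j) * app T G v j)"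
  unfolding fv_def app_def by (simp add: sum_distrib_left mult.assoc)

lemma bounded_opD:
  assumes "bounded_op T" "finite F" "finite G" "nrm2 F w \<le> 1" "nrm2 G v \<le> 1"
  shows "cmod (fv T F G w v) \<le> opnorm T"
proof -
  have "cmod (fv T F G w v) \<in> form_values T" unfolding form_values_eq using assms by blast
  thus ?thesis using assms(1) unfolding bounded_op_def opnorm_def by (simp add: cSup_upper)
qed

lemma opnorm_nonneg: assumes "bounded_op T" shows "0 \<le> opnorm T"
  using bounded_opD[OF assms, of "{}" "{}" "\<lambda>_. 0" "\<lambda>_. 0"] by (simp add: fv_def nrm2_def)

lemma bounded_opI:
  assumes "\<And>F G w v. finite F \<Longrightarrow> finite G \<Longrightarrow> nrm2 F w \<le> 1 \<Longrightarrow> nrm2 G v \<le> 1 \<Longrightarrow> cmod (fv T F G w v) \<le> C"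
  shows "bounded_op T \<and> opnorm T \<le> C"
proof -
  have "cmod (fv T {} {} (\<lambda>_. 0) (\<lambda>_. 0)) \<in> form_values T" unfolding form_values_eq
    by (rule CollectI, intro exI conjI) (auto simp: nrm2_def)
  then have ne: "form_values T \<noteq> {}" by blast
  have le: "\<And>x. x \<in> form_values T \<Longrightarrow> x \<le> C" unfolding form_values_eq using assms by blast
  show ?thesis unfolding bounded_op_def opnorm_def
    using ne le by (meson bdd_aboveI cSup_least)
qed

lemma fv_scale:
  fixes a b :: real
  shows "fv T F G (\<lambda>j. w j / of_real a) (\<lambda>i. v i / of_real b) = fv T F G w v / of_real (a * b)"
  unfolding fv_def by (simp add: sum_divide_distrib[symmetric] field_simps)

lemma nrm2_scale:
  fixes a :: real assumes "a > 0"
  shows "nrm2 F (\<lambda>j. w j / of_real a) = nrm2 F w / a\<^sup>2"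
  unfolding nrm2_def by (simp add: sum_divide_distrib norm_divide power_divide)

lemma nrm2_zero: "finite F \<Longrightarrow> nrm2 F w = 0 \<Longrightarrow> j \<in> F \<Longrightarrow> w j = 0"
  unfolding nrm2_def by (simp add: sum_nonneg_eq_0_iff)

lemma bounded_op_bound:
  assumes "bounded_op T" "finite F" "finite G"
  shows "cmod (fv T F G w v) \<le> opnorm T * sqrt (nrm2 F w) * sqrt (nrm2 G v)"
proof (cases "nrm2 F w = 0 \<or> nrm2 G v = 0")
  case True
  then have "fv T F G w v = 0"
  proof
    assume "nrm2 F w = 0" then have "\<forall>j\<in>F. w j = 0" using nrm2_zero[OF assms(2)] by blast
    then show ?thesis unfolding fv_def by simp
  next
    assume "nrm2 G v = 0" then have "\<forall>j\<in>G. v j = 0" using nrm2_zero[OF assms(3)] by blast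
    then show ?thesis unfolding fv_def by simp
  qed
  then show ?thesis using opnorm_nonneg[OF assms(1)] by (simp add: nrm2_nonneg)
next
  case False
  define a where "a = sqrt (nrm2 F w)"
  define b where "b = sqrt (nrm2 G v)"
  have a: "a > 0" and b: "b > 0" using False nrm2_nonneg[of F w] nrm2_nonneg[of G v]
    unfolding a_def b_def by auto
  have "nrm2 F (\<lambda>j. w j / of_real a) = 1" using a unfolding nrm2_scale[OF a]
    using False nrm2_nonneg[of F w] by (simp add: a_def)
  moreover have "nrm2 G (\<lambda>j. v j / of_real b) = 1" using b unfolding nrm2_scale[OF b]
    using False nrm2_nonneg[of G v] by (simp add: b_def)
  ultimately have "cmod (fv T F G (\<lambda>j. w j / of_real a) (\<lambda>i. v i / of_real b)) \<le> opnorm T"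
    by (intro bounded_opD assms) auto
  then have "cmod (fv T F G w v) / (a * b) \<le> opnorm T"
    unfolding fv_scale using a b by (simp add: norm_divide norm_mult)
  then show ?thesis using a b unfolding a_def[symmetric] b_def[symmetric]
    by (simp add: pos_divide_le_eq mult.assoc)
qed

lemma app_bound:
  assumes "bounded_op T" "finite F" "finite G"
  shows "nrm2 F (app T G v) \<le> (opnorm T)\<^sup>2 * nrm2 G v"
proof -
  define S where "S = nrm2 F (app T G v)"
  have "fv T F G (app T G v) v = of_real S"
    unfolding fv_app S_def nrm2_def
    by (simp only: cnj_self of_real_sum)
  then have "S \<le> opnorm T * sqrt S * sqrt (nrm2 G v)"
    using bounded_op_bound[OF assms, of "app T G v" v] nrm2_nonneg[of F "app T G v"]
    by (simp add: S_def)
  moreover have S0: "S \<ge> 0" unfolding S_def by (rule nrm2_nonneg)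
  ultimately have "sqrt S * sqrt S \<le> sqrt S * (opnorm T * sqrt (nrm2 G v))"
    by (simp add: mult_ac)
  then have "sqrt S \<le> opnorm T * sqrt (nrm2 G v) \<or> S = 0"
    using S0 by (metis mult_le_cancel_left_pos real_sqrt_gt_0_iff less_eq_real_def)
  then show ?thesis
  proof
    assume h: "sqrt S \<le> opnorm T * sqrt (nrm2 G v)"
    have "S = (sqrt S)\<^sup>2" using S0 by simp
    also have "\<dots> \<le> (opnorm T * sqrt (nrm2 G v))\<^sup>2" by (rule power_mono[OF h]) (simp add: S0)
    also have "\<dots> = (opnorm T)\<^sup>2 * nrm2 G v" using nrm2_nonneg[of G v] by (simp add: power_mult_distrib)
    finally show ?thesis by (simp add: S_def)
  next
    assume "S = 0" then show ?thesis by (simp add: S_def nrm2_nonneg)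
  qed
qed


lemma bounded_op_mono:
  assumes "bounded_op T'"
    and "\<And>F G w v. finite F \<Longrightarrow> finite G \<Longrightarrow> nrm2 F w \<le> 1 \<Longrightarrow> nrm2 G v \<le> 1 \<Longrightarrow>
      \<exists>F' G' w' v'. finite F' \<and> finite G' \<and> nrm2 F' w' \<le> 1 \<and> nrm2 G' v' \<le> 1
         \<and> cmod (fv T F G w v) = cmod (fv T' F' G' w' v')"
  shows "bounded_op T \<and> opnorm T \<le> opnorm T'"
  by (rule bounded_opI) (metis assms bounded_opD)

lemma fv_add: "fv (\<lambda>j i. A j i + B j i) F G w v = fv A F G w v + fv B F G w v"
  unfolding fv_def by (simp add: sum.distrib distrib_left distrib_right)

lemma fv_neg: "fv (\<lambda>j i. - A j i) F G w v = - fv A F G w v"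
  unfolding fv_def by (simp add: sum_negf)

lemma fv_sum: "fv (\<lambda>j i. \<Sum>k\<in>K. A k j i) F G w v = (\<Sum>k\<in>K. fv (A k) F G w v)"
  unfolding fv_def by (simp add: sum_distrib_left sum_distrib_right sum.swap[of _ K])

lemma opnorm_add:
  assumes "bounded_op A" "bounded_op B"
  shows "bounded_op (\<lambda>j i. A j i + B j i) \<and> opnorm (\<lambda>j i. A j i + B j i) \<le> opnorm A + opnorm B"
  apply (rule bounded_opI)
  subgoal for F G w v
    unfolding fv_add
    using bounded_opD[OF assms(1), of F G w v] bounded_opD[OF assms(2), of F G w v]
      norm_triangle_ineq[of "fv A F G w v" "fv B F G w v"]
    by simp
  done

lemma form_values_neg: "form_values (\<lambda>j i. - A j i) = form_values A"
  unfolding form_values_eq fv_neg by simp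

lemma bounded_neg: "bounded_op (\<lambda>j i. - A j i) = bounded_op A"
  unfolding bounded_op_def form_values_neg ..

lemma opnorm_neg: "opnorm (\<lambda>j i. - A j i) = opnorm A"
  unfolding opnorm_def form_values_neg ..

lemma opnorm_diff:
  assumes "bounded_op A" "bounded_op B"
  shows "bounded_op (\<lambda>j i. A j i - B j i) \<and> opnorm (\<lambda>j i. A j i - B j i) \<le> opnorm A + opnorm B"
  using opnorm_add[OF assms(1), of "\<lambda>j i. - B j i"] assms(2) by (simp add: bounded_neg opnorm_neg)

lemma opnorm_swap: "opnorm (\<lambda>j i. A j i - B j i) = opnorm (\<lambda>j i. B j i - A j i)"
  using opnorm_neg[of "\<lambda>j i. A j i - B j i"] by simp

lemma bounded_swap: "bounded_op (\<lambda>j i. A j i - B j i) = bounded_op (\<lambda>j i. B j i - A j i)"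
  using bounded_neg[of "\<lambda>j i. A j i - B j i"] by simp

lemma opnorm_tri:
  assumes "bounded_op (\<lambda>j i. A j i - B j i)" "bounded_op (\<lambda>j i. B j i - C j i)"
  shows "bounded_op (\<lambda>j i. A j i - C j i) \<and>
     opnorm (\<lambda>j i. A j i - C j i) \<le> opnorm (\<lambda>j i. A j i - B j i) + opnorm (\<lambda>j i. B j i - C j i)"
  using opnorm_add[OF assms] by simp

lemma opnorm_sum:
  assumes "finite K" "\<And>k. k \<in> K \<Longrightarrow> bounded_op (A k)"
  shows "bounded_op (\<lambda>j i. \<Sum>k\<in>K. A k j i) \<and> opnorm (\<lambda>j i. \<Sum>k\<in>K. A k j i) \<le> (\<Sum>k\<in>K. opnorm (A k))"
  using assms
proof (induction K rule: finite_induct)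
  case empty
  show ?case by (rule bounded_opI) (simp add: fv_def)
next
  case (insert x K)
  have e: "(\<lambda>j i. \<Sum>k\<in>insert x K. A k j i) = (\<lambda>j i. A x j i + (\<Sum>k\<in>K. A k j i))"
    using insert by simp
  show ?case unfolding e using opnorm_add[of "A x" "\<lambda>j i. \<Sum>k\<in>K. A k j i"] insert by force
qed

lemma infsum_sum_gen:
  fixes f :: "'i \<Rightarrow> 'a \<Rightarrow> 'b::{topological_comm_monoid_add,t2_space}"
  assumes "finite I" "\<And>i. i \<in> I \<Longrightarrow> f i summable_on A"
  shows "(\<lambda>x. \<Sum>i\<in>I. f i x) summable_on A \<and> infsum (\<lambda>x. \<Sum>i\<in>I. f i x) A = (\<Sum>i\<in>I. infsum (f i) A)"
  using assms
proof (induction I rule: finite_induct)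
  case empty then show ?case by simp
next
  case (insert y I)
  then have s: "f y summable_on A" and ih: "(\<lambda>x. \<Sum>i\<in>I. f i x) summable_on A"
     "infsum (\<lambda>x. \<Sum>i\<in>I. f i x) A = (\<Sum>i\<in>I. infsum (f i) A)" by auto
  show ?case using insert(1,2) s ih
    by (simp add: summable_on_add infsum_add)
qed

lemma col_summable:
  assumes "bounded_op T" "finite G"
  shows "(\<lambda>j. (cmod (app T G v j))\<^sup>2) summable_on UNIV \<and>
    infsum (\<lambda>j. (cmod (app T G v j))\<^sup>2) UNIV \<le> (opnorm T)\<^sup>2 * nrm2 G v"
proof -
  have b: "\<And>F. finite F \<Longrightarrow> sum (\<lambda>j. (cmod (app T G v j))\<^sup>2) F \<le> (opnorm T)\<^sup>2 * nrm2 G v"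
    using app_bound[OF assms(1) _ assms(2)] unfolding nrm2_def by blast
  have s: "(\<lambda>j. (cmod (app T G v j))\<^sup>2) summable_on UNIV"
    by (rule nonneg_bdd_above_summable_on) (use b in \<open>auto intro!: bdd_aboveI\<close>)
  show ?thesis using s b by (simp add: infsum_le_finite_sums)
qed

lemma app_single: "app T {i} (\<lambda>_. 1) = (\<lambda>j. T j i)"
  unfolding app_def by simp

lemma col_summable1:
  assumes "bounded_op T"
  shows "(\<lambda>j. (cmod (T j i))\<^sup>2) summable_on UNIV"
  using col_summable[OF assms, of "{i}" "\<lambda>_. 1"] unfolding app_single by simp

lemma prod_summable:
  fixes f g :: "'a \<Rightarrow> complex"
  assumes "(\<lambda>j. (cmod (f j))\<^sup>2) summable_on A" "(\<lambda>j. (cmod (g j))\<^sup>2) summable_on A"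
  shows "(\<lambda>j. norm (f j * g j)) summable_on A" "(\<lambda>j. f j * g j) summable_on A"
proof -
  have le: "norm (f j * g j) \<le> (cmod (f j))\<^sup>2 + (cmod (g j))\<^sup>2" for j
  proof -
    have "0 \<le> (cmod (f j) - cmod (g j))\<^sup>2" by simp
    then have "2 * (cmod (f j) * cmod (g j)) \<le> (cmod (f j))\<^sup>2 + (cmod (g j))\<^sup>2"
      by (simp add: power2_diff)
    moreover have "0 \<le> cmod (f j) * cmod (g j)" by simp
    ultimately show ?thesis unfolding norm_mult by linarith
  qed
  show a: "(\<lambda>j. norm (f j * g j)) summable_on A"
    by (rule summable_on_comparison_test[OF summable_on_add[OF assms]]) (use le in auto)
  show "(\<lambda>j. f j * g j) summable_on A" by (rule abs_summable_summable[OF a])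
qed

lemma infsum_CS:
  fixes f g :: "'a \<Rightarrow> complex"
  assumes "(\<lambda>j. (cmod (f j))\<^sup>2) summable_on UNIV" "(\<lambda>j. (cmod (g j))\<^sup>2) summable_on UNIV"
  shows "cmod (infsum (\<lambda>j. cnj (f j) * g j) UNIV) \<le>
     sqrt (infsum (\<lambda>j. (cmod (f j))\<^sup>2) UNIV) * sqrt (infsum (\<lambda>j. (cmod (g j))\<^sup>2) UNIV)"
proof -
  have f': "(\<lambda>j. (cmod (cnj (f j)))\<^sup>2) summable_on UNIV" using assms(1) by simp
  note ps = prod_summable[OF f' assms(2)]
  have "cmod (infsum (\<lambda>j. cnj (f j) * g j) UNIV) \<le> infsum (\<lambda>j. norm (cnj (f j) * g j)) UNIV"
    by (rule norm_infsum_bound[OF ps(1)])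
  also have "\<dots> \<le> sqrt (infsum (\<lambda>j. (cmod (f j))\<^sup>2) UNIV) * sqrt (infsum (\<lambda>j. (cmod (g j))\<^sup>2) UNIV)"
  proof (rule infsum_le_finite_sums[OF ps(1)])
    fix F :: "'a set" assume F: "finite F"
    have "(\<Sum>j\<in>F. cmod (f j) * cmod (g j))\<^sup>2 \<le> (\<Sum>j\<in>F. (cmod (f j))\<^sup>2) * (\<Sum>j\<in>F. (cmod (g j))\<^sup>2)"
      by (rule Cauchy_Schwarz_ineq_sum)
    then have "(\<Sum>j\<in>F. cmod (f j) * cmod (g j)) \<le> sqrt ((\<Sum>j\<in>F. (cmod (f j))\<^sup>2) * (\<Sum>j\<in>F. (cmod (g j))\<^sup>2))"
      by (rule real_le_rsqrt)
    also have "\<dots> = sqrt (\<Sum>j\<in>F. (cmod (f j))\<^sup>2) * sqrt (\<Sum>j\<in>F. (cmod (g j))\<^sup>2)"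
      by (simp add: real_sqrt_mult)
    also have "\<dots> \<le> sqrt (infsum (\<lambda>j. (cmod (f j))\<^sup>2) UNIV) * sqrt (infsum (\<lambda>j. (cmod (g j))\<^sup>2) UNIV)"
      by (intro mult_mono real_sqrt_le_mono finite_sum_le_infsum assms F) (auto intro!: infsum_nonneg sum_nonneg)
    finally show "sum (\<lambda>j. norm (cnj (f j) * g j)) F \<le> sqrt (infsum (\<lambda>j. (cmod (f j))\<^sup>2) UNIV) * sqrt (infsum (\<lambda>j. (cmod (g j))\<^sup>2) UNIV)"
      by (simp add: norm_mult)
  qed
  finally show ?thesis .
qed


lemma col_prod_summable:
  assumes "bounded_op A" "bounded_op B"
  shows "(\<lambda>j. cnj (A j i) * B j k) summable_on UNIV"
  using prod_summable(2)[of "\<lambda>j. cnj (A j i)" UNIV "\<lambda>j. B j k"] col_summable1[OF assms(1)]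
    col_summable1[OF assms(2)] by simp

lemma mmult_madj: "mmult (madj A) B i k = infsum (\<lambda>j. cnj (A j i) * B j k) UNIV"
  unfolding mmult_def madj_def by simp

lemma mmult_form:
  assumes "bounded_op A" "bounded_op B" "finite F" "finite G"
  shows "fv (mmult (madj A) B) F G w v = infsum (\<lambda>j. cnj (app A F w j) * app B G v j) UNIV"
proof -
  note sm = col_prod_summable[OF assms(1,2)]
  have sm2: "\<And>i k. (\<lambda>j. cnj (w i) * (cnj (A j i) * B j k) * v k) summable_on UNIV"
    using sm by (intro summable_on_cmult_left summable_on_cmult_right)
  have sm3: "(\<lambda>j. \<Sum>k\<in>G. cnj (w i) * (cnj (A j i) * B j k) * v k) summable_on UNIV" for i
    using infsum_sum_gen[OF assms(4), of "\<lambda>k j. cnj (w i) * (cnj (A j i) * B j k) * v k" UNIV] sm2 by blast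
  have "fv (mmult (madj A) B) F G w v =
      (\<Sum>i\<in>F. \<Sum>k\<in>G. infsum (\<lambda>j. cnj (w i) * (cnj (A j i) * B j k) * v k) UNIV)"
    unfolding fv_def mmult_madj
    by (simp add: infsum_cmult_left infsum_cmult_right sm summable_on_cmult_right)
  also have "\<dots> = (\<Sum>i\<in>F. infsum (\<lambda>j. \<Sum>k\<in>G. cnj (w i) * (cnj (A j i) * B j k) * v k) UNIV)"
    using infsum_sum_gen[OF assms(4) sm2] by simp
  also have "\<dots> = infsum (\<lambda>j. \<Sum>i\<in>F. \<Sum>k\<in>G. cnj (w i) * (cnj (A j i) * B j k) * v k) UNIV"
    using infsum_sum_gen[OF assms(3) sm3] by simp
  also have "\<dots> = infsum (\<lambda>j. cnj (app A F w j) * app B G v j) UNIV"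
    unfolding app_def by (simp add: sum_product mult_ac sum.swap[of _ G])
  finally show ?thesis .
qed

lemma mmult_bound:
  assumes "bounded_op A" "bounded_op B"
  shows "bounded_op (mmult (madj A) B) \<and> opnorm (mmult (madj A) B) \<le> opnorm A * opnorm B"
  apply (rule bounded_opI)
  subgoal for F G w v
  proof -
    assume h: "finite F" "finite G" "nrm2 F w \<le> 1" "nrm2 G v \<le> 1"
    note ca = col_summable[OF assms(1) h(1), of w]
    note cb = col_summable[OF assms(2) h(2), of v]
    have "cmod (fv (mmult (madj A) B) F G w v) \<le>
      sqrt (infsum (\<lambda>j. (cmod (app A F w j))\<^sup>2) UNIV) * sqrt (infsum (\<lambda>j. (cmod (app B G v j))\<^sup>2) UNIV)"
      unfolding mmult_form[OF assms h(1,2)] by (rule infsum_CS) (use ca cb in auto)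
    also have "\<dots> \<le> sqrt ((opnorm A)\<^sup>2) * sqrt ((opnorm B)\<^sup>2)"
    proof (intro mult_mono real_sqrt_le_mono)
      show "infsum (\<lambda>j. (cmod (app A F w j))\<^sup>2) UNIV \<le> (opnorm A)\<^sup>2"
        using ca h(3) nrm2_nonneg[of F w] by (smt (verit) mult_left_le zero_le_power2)
      show "infsum (\<lambda>j. (cmod (app B G v j))\<^sup>2) UNIV \<le> (opnorm B)\<^sup>2"
        using cb h(4) nrm2_nonneg[of G v] by (smt (verit) mult_left_le zero_le_power2)
    qed (auto intro!: infsum_nonneg)
    also have "\<dots> = opnorm A * opnorm B"
      using opnorm_nonneg[OF assms(1)] opnorm_nonneg[OF assms(2)] by simp
    finally show ?thesis .
  qed
  done

lemma mmult_quad: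
  assumes "bounded_op a" "finite G"
  shows "Re (fv (mmult (madj a) a) G G v v) = infsum (\<lambda>j. (cmod (app a G v j))\<^sup>2) UNIV"
proof -
  note c = col_summable[OF assms, of v]
  have s: "(\<lambda>j. cnj (app a G v j) * app a G v j) summable_on UNIV"
    using prod_summable(2)[of "\<lambda>j. cnj (app a G v j)" UNIV "\<lambda>j. app a G v j"] c by simp
  show ?thesis unfolding mmult_form[OF assms(1,1,2,2)] infsum_Re[OF s, symmetric]
    by (simp add: cnj_self)
qed


definition tlm :: "nat \<Rightarrow> (('a \<times> nat) \<Rightarrow> 'b \<Rightarrow> complex) \<Rightarrow> (('a \<times> nat) \<Rightarrow> 'b \<Rightarrow> complex)" where
  "tlm N T = (\<lambda>p x. if snd p < N then 0 else T p x)"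

definition emb :: "nat \<Rightarrow> ('a \<Rightarrow> 'b \<Rightarrow> complex) \<Rightarrow> (('a \<times> nat) \<Rightarrow> 'b \<Rightarrow> complex)" where
  "emb k A = (\<lambda>p x. if snd p = k then A (fst p) x else 0)"

lemma nrm2_mono: "finite F \<Longrightarrow> F' \<subseteq> F \<Longrightarrow> nrm2 F' w \<le> nrm2 F w"
  unfolding nrm2_def by (rule sum_mono2) auto

lemma slice_bounded:
  fixes T :: "('a \<times> nat) \<Rightarrow> 'a \<Rightarrow> complex"
  assumes "bounded_op T"
  shows "bounded_op (slice T k) \<and> opnorm (slice T k) \<le> opnorm T"
proof (rule bounded_op_mono[OF assms])
  fix F :: "'a set" and G :: "'a set" and w v
  assume h: "finite F" "finite G" "nrm2 F w \<le> 1" "nrm2 G v \<le> 1"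
  define F' where "F' = (\<lambda>y. (y, k)) ` F"
  define w' where "w' = (\<lambda>p::('a \<times> nat). w (fst p))"
  have inj: "inj_on (\<lambda>y. (y, k)) F" by (auto simp: inj_on_def)
  have "nrm2 F' w' = nrm2 F w" unfolding F'_def w'_def nrm2_def
    by (simp add: sum.reindex[OF inj] o_def)
  moreover have "fv (slice T k) F G w v = fv T F' G w' v" unfolding F'_def w'_def fv_def
    by (simp add: sum.reindex[OF inj] o_def slice_def)
  moreover have "finite F'" using h unfolding F'_def by simp
  ultimately show "\<exists>F' G' w' v'. finite F' \<and> finite G' \<and> nrm2 F' w' \<le> 1 \<and> nrm2 G' v' \<le> 1
         \<and> cmod (fv (slice T k) F G w v) = cmod (fv T F' G' w' v')"
    by (intro exI[of _ F'] exI[of _ G] exI[of _ w'] exI[of _ v]) (use h in auto)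
qed

lemma tlm_bounded:
  fixes T :: "('a \<times> nat) \<Rightarrow> 'b \<Rightarrow> complex"
  assumes "bounded_op T"
  shows "bounded_op (tlm N T) \<and> opnorm (tlm N T) \<le> opnorm T"
proof (rule bounded_op_mono[OF assms])
  fix F :: "('a \<times> nat) set" and G :: "'b set" and w v
  assume h: "finite F" "finite G" "nrm2 F w \<le> 1" "nrm2 G v \<le> 1"
  define F' where "F' = {p\<in>F. \<not> snd p < N}"
  have "nrm2 F' w \<le> nrm2 F w" unfolding F'_def by (rule nrm2_mono[OF h(1)]) auto
  moreover have "fv (tlm N T) F G w v = fv T F' G w v"
  proof -
    have "fv (tlm N T) F G w v = (\<Sum>p\<in>F. if \<not> snd p < N then (\<Sum>i\<in>G. cnj (w p) * T p i * v i) else 0)"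
      unfolding fv_def tlm_def by (rule sum.cong) auto
    also have "\<dots> = fv T F' G w v" unfolding F'_def fv_def using h(1) by (simp add: sum.inter_filter)
    finally show ?thesis .
  qed
  moreover have "finite F'" using h unfolding F'_def by simp
  ultimately show "\<exists>F' G' w' v'. finite F' \<and> finite G' \<and> nrm2 F' w' \<le> 1 \<and> nrm2 G' v' \<le> 1
         \<and> cmod (fv (tlm N T) F G w v) = cmod (fv T F' G' w' v')"
    by (intro exI[of _ F'] exI[of _ G] exI[of _ w] exI[of _ v]) (use h in auto)
qed

lemma emb_bounded:
  fixes A :: "'a \<Rightarrow> 'b \<Rightarrow> complex"
  assumes "bounded_op A"
  shows "bounded_op (emb k A) \<and> opnorm (emb k A) \<le> opnorm A"
proof (rule bounded_op_mono[OF assms])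
  fix F :: "('a \<times> nat) set" and G :: "'b set" and w v
  assume h: "finite F" "finite G" "nrm2 F w \<le> 1" "nrm2 G v \<le> 1"
  define S where "S = {p\<in>F. snd p = k}"
  define w' where "w' = (\<lambda>y. w (y, k))"
  have inj: "inj_on fst S" unfolding S_def by (auto simp: inj_on_def prod_eq_iff)
  have fS: "finite S" using h unfolding S_def by simp
  have wS: "\<And>p. p \<in> S \<Longrightarrow> w' (fst p) = w p" unfolding S_def w'_def by auto
  have "nrm2 (fst ` S) w' = nrm2 S w" unfolding nrm2_def
    by (simp add: sum.reindex[OF inj] o_def wS)
  also have "\<dots> \<le> nrm2 F w" unfolding S_def by (rule nrm2_mono[OF h(1)]) auto
  finally have n: "nrm2 (fst ` S) w' \<le> 1" using h by simp
  have "fv (emb k A) F G w v = (\<Sum>p\<in>F. if snd p = k then (\<Sum>i\<in>G. cnj (w p) * A (fst p) i * v i) else 0)"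
    unfolding fv_def emb_def by (rule sum.cong) auto
  also have "\<dots> = (\<Sum>p\<in>S. \<Sum>i\<in>G. cnj (w p) * A (fst p) i * v i)"
    unfolding S_def using h(1) by (simp add: sum.inter_filter)
  also have "\<dots> = fv A (fst ` S) G w' v" unfolding fv_def
    by (simp add: sum.reindex[OF inj] o_def wS)
  finally have "fv (emb k A) F G w v = fv A (fst ` S) G w' v" .
  then show "\<exists>F' G' w' v'. finite F' \<and> finite G' \<and> nrm2 F' w' \<le> 1 \<and> nrm2 G' v' \<le> 1
         \<and> cmod (fv (emb k A) F G w v) = cmod (fv A F' G' w' v')" 
    by (intro exI[of _ "fst ` S"] exI[of _ G] exI[of _ w'] exI[of _ v]) (use h n fS in auto)
qed

lemma d1_eq: "d1 d (y, Suc k) (x, 0) = d y x + real k + 1"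
  unfolding d1_def by simp

lemma slice_roe:
  assumes "T \<in> M_Y_d1 d" "is_metric d"
  shows "slice T k \<in> uniform_roe d"
proof -
  have bT: "bounded_op T" and ap: "\<And>e. e > 0 \<Longrightarrow> \<exists>S. bounded_op S \<and>
     finite_prop (\<lambda>(y, k) x. d1 d (y, Suc k) (x, 0)) S \<and> opnorm (\<lambda>j i. T j i - S j i) < e"
    using assms(1) unfolding M_Y_d1_def norm_closure_fp_def by auto
  have d0: "\<And>x y. 0 \<le> d x y" using assms(2) unfolding is_metric_def by auto
  show ?thesis unfolding uniform_roe_def norm_closure_fp_def
  proof (intro CollectI conjI allI impI)
    show "bounded_op (slice T k)" using slice_bounded[OF bT] by simp
    fix e :: real assume e: "e > 0"
    obtain S where S: "bounded_op S" "finite_prop (\<lambda>(y, k) x. d1 d (y, Suc k) (x, 0)) S"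
      "opnorm (\<lambda>j i. T j i - S j i) < e" using ap[OF e] by blast
    obtain L where L: "\<And>j i. (\<lambda>(y, k) x. d1 d (y, Suc k) (x, 0)) j i \<ge> L \<Longrightarrow> S j i = 0"
      using S(2) unfolding finite_prop_def by blast
    have "finite_prop d (slice S k)" unfolding finite_prop_def
    proof (intro exI allI impI)
      fix y x assume "L \<le> d y x"
      then have "L \<le> (\<lambda>(y, k) x. d1 d (y, Suc k) (x, 0)) (y, k) x" by (simp add: d1_eq)
      then show "slice S k y x = 0" using L unfolding slice_def by blast
    qed
    moreover have "bounded_op (slice S k)" using slice_bounded[OF S(1)] by simp
    moreover have "opnorm (\<lambda>j i. slice T k j i - slice S k j i) < e"
    proof -
      have b: "bounded_op (\<lambda>j i. T j i - S j i)" using opnorm_diff[OF bT S(1)] by simp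
      have "opnorm (\<lambda>j i. slice T k j i - slice S k j i) = opnorm (slice (\<lambda>j i. T j i - S j i) k)"
        unfolding slice_def ..
      also have "\<dots> \<le> opnorm (\<lambda>j i. T j i - S j i)" using slice_bounded[OF b] by simp
      finally show ?thesis using S(3) by simp
    qed
    ultimately show "\<exists>S. bounded_op S \<and> finite_prop d S \<and> opnorm (\<lambda>j i. slice T k j i - S j i) < e"
      by blast
  qed
qed


lemma restrict_summable:
  fixes f :: "'a \<Rightarrow> complex"
  assumes "f summable_on UNIV"
  shows "(\<lambda>p. if P p then f p else 0) summable_on UNIV"
proof -
  have "f summable_on {p. P p}" by (rule summable_on_subset_banach[OF assms]) simp
  then show ?thesis
    using summable_on_cong_neutral[of UNIV "{p. P p}" "\<lambda>p. if P p then f p else 0" f] by auto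
qed

lemma infsum_restrict:
  fixes f :: "'a \<Rightarrow> complex"
  shows "infsum (\<lambda>p. if P p then f p else 0) UNIV = infsum f {p. P p}"
  by (rule infsum_cong_neutral) auto

lemma infsum_layers:
  fixes f :: "('a \<times> nat) \<Rightarrow> complex"
  assumes "f summable_on UNIV"
  shows "infsum (\<lambda>p. if snd p < N then f p else 0) UNIV = (\<Sum>n<N. infsum (\<lambda>y. f (y, n)) UNIV)"
proof -
  have e: "(\<lambda>p. if snd p < N then f p else 0) = (\<lambda>p. \<Sum>n\<in>{..<N}. if snd p = n then f p else 0)"
    by (auto simp: fun_eq_iff)
  have s: "\<And>n. (\<lambda>p. if snd p = n then f p else 0) summable_on UNIV"
    by (rule restrict_summable[OF assms])
  have l: "infsum (\<lambda>p. if snd p = n then f p else 0) UNIV = infsum (\<lambda>y. f (y, n)) UNIV" for n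
  proof -
    have r: "{p. snd p = n} = range (\<lambda>y. (y, n))" by auto
    have inj: "inj_on (\<lambda>y. (y, n)) UNIV" by (auto simp: inj_on_def)
    show ?thesis unfolding infsum_restrict r infsum_reindex[OF inj] o_def ..
  qed
  show ?thesis unfolding e using infsum_sum_gen[of "{..<N}" "\<lambda>n p. if snd p = n then f p else 0" UNIV] s l
    by simp
qed

lemma mm_split:
  fixes T :: "('a \<times> nat) \<Rightarrow> 'a \<Rightarrow> complex"
  assumes "bounded_op T"
  shows "mmult (madj T) T x z = (\<Sum>n<N. mmult (madj (slice T n)) (slice T n) x z)
     + mmult (madj (tlm N T)) (tlm N T) x z"
proof -
  define f where "f p = cnj (T p x) * T p z" for p
  have s: "f summable_on UNIV" unfolding f_def by (rule col_prod_summable[OF assms assms])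
  have e1: "mmult (madj T) T x z = infsum f UNIV" unfolding mmult_madj f_def ..
  have e2: "mmult (madj (tlm N T)) (tlm N T) x z = infsum (\<lambda>p. if \<not> snd p < N then f p else 0) UNIV"
    unfolding mmult_madj f_def tlm_def by (rule infsum_cong) simp
  have e3: "mmult (madj (slice T n)) (slice T n) x z = infsum (\<lambda>y. f (y, n)) UNIV" for n
    unfolding mmult_madj f_def slice_def ..
  have "infsum f UNIV = infsum (\<lambda>p. (if snd p < N then f p else 0) + (if \<not> snd p < N then f p else 0)) UNIV"
    by (rule infsum_cong) simp
  also have "\<dots> = infsum (\<lambda>p. if snd p < N then f p else 0) UNIV + infsum (\<lambda>p. if \<not> snd p < N then f p else 0) UNIV"
    by (rule infsum_add) (use restrict_summable[OF s] in auto)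
  finally show ?thesis unfolding e1 e2 e3 infsum_layers[OF s] .
qed

lemma fw_conv:
  fixes T :: "('a \<times> nat) \<Rightarrow> 'a \<Rightarrow> complex"
  assumes "T \<in> M_Y_d1 d" "is_metric d"
  shows "(\<lambda>N. opnorm (\<lambda>x z. (\<Sum>n<N. mmult (madj (slice T n)) (slice T n) x z) - mmult (madj T) T x z)) \<longlonglongrightarrow> 0"
proof (rule LIMSEQ_I)
  have bT: "bounded_op T" and ap: "\<And>e. e > 0 \<Longrightarrow> \<exists>S. bounded_op S \<and>
     finite_prop (\<lambda>(y, k) x. d1 d (y, Suc k) (x, 0)) S \<and> opnorm (\<lambda>j i. T j i - S j i) < e"
    using assms(1) unfolding M_Y_d1_def norm_closure_fp_def by auto
  have d0: "\<And>x y. 0 \<le> d x y" using assms(2) unfolding is_metric_def by auto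
  fix r :: real assume r: "0 < r"
  obtain S where S: "bounded_op S" "finite_prop (\<lambda>(y, k) x. d1 d (y, Suc k) (x, 0)) S"
      "opnorm (\<lambda>j i. T j i - S j i) < sqrt r" using ap r by (meson real_sqrt_gt_zero)
  obtain L where L: "\<And>j i. (\<lambda>(y, k) x. d1 d (y, Suc k) (x, 0)) j i \<ge> L \<Longrightarrow> S j i = 0"
    using S(2) unfolding finite_prop_def by blast
  have bD: "bounded_op (\<lambda>j i. T j i - S j i)" using opnorm_diff[OF bT S(1)] by simp
  show "\<exists>no. \<forall>N\<ge>no. norm (opnorm (\<lambda>x z. (\<Sum>n<N. mmult (madj (slice T n)) (slice T n) x z) - mmult (madj T) T x z) - 0) < r"
  proof (intro exI allI impI)
    fix N assume N: "nat \<lceil>L\<rceil> \<le> N"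
    have eq: "(\<lambda>x z. (\<Sum>n<N. mmult (madj (slice T n)) (slice T n) x z) - mmult (madj T) T x z)
        = (\<lambda>x z. - mmult (madj (tlm N T)) (tlm N T) x z)"
      by (simp add: fun_eq_iff mm_split[OF bT, of _ _ N])
    have tl: "tlm N T = tlm N (\<lambda>j i. T j i - S j i)"
    proof (intro ext)
      fix p :: "'a \<times> nat" and x :: 'a
      obtain y k where p: "p = (y, k)" by (cases p)
      show "tlm N T p x = tlm N (\<lambda>j i. T j i - S j i) p x"
      proof (cases "k < N")
        case False
        have "real N \<ge> L" using N by linarith
        then have "L \<le> (\<lambda>(y, k) x. d1 d (y, Suc k) (x, 0)) (y, k) x"
          using False d0[of y x] by (simp add: d1_eq)
        then have "S (y, k) x = 0" by (rule L)
        then show ?thesis unfolding tlm_def p by simp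
      qed (simp add: tlm_def p)
    qed
    have bt: "bounded_op (tlm N T) \<and> opnorm (tlm N T) < sqrt r"
      using tlm_bounded[OF bD, of N] tlm_bounded[OF bT, of N] S(3) unfolding tl[symmetric] by simp
    have mb: "bounded_op (mmult (madj (tlm N T)) (tlm N T)) \<and>
       opnorm (mmult (madj (tlm N T)) (tlm N T)) \<le> opnorm (tlm N T) * opnorm (tlm N T)"
      using mmult_bound bt by blast
    have "opnorm (tlm N T) * opnorm (tlm N T) < sqrt r * sqrt r"
      using bt opnorm_nonneg[of "tlm N T"] r by (intro mult_strict_mono) auto
    then have lt: "opnorm (mmult (madj (tlm N T)) (tlm N T)) < r" using mb r by simp
    have ge: "0 \<le> opnorm (mmult (madj (tlm N T)) (tlm N T))" using mb opnorm_nonneg by blast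
    show "norm (opnorm (\<lambda>x z. (\<Sum>n<N. mmult (madj (slice T n)) (slice T n) x z) - mmult (madj T) T x z) - 0) < r"
      unfolding eq opnorm_neg using lt ge by simp
  qed
qed


lemma infsum_diff2:
  fixes f g :: "'a \<Rightarrow> complex"
  assumes "f summable_on A" "g summable_on A"
  shows "infsum (\<lambda>x. f x - g x) A = infsum f A - infsum g A"
  using infsum_add[OF assms(1), of "\<lambda>x. - g x"] assms(2)
  by (simp add: summable_on_uminus infsum_uminus)

lemma mm_decomp:
  assumes "bounded_op T" "bounded_op S"
  shows "mmult (madj T) T x z - mmult (madj S) S x z =
    mmult (madj T) (\<lambda>p x. T p x - S p x) x z + mmult (madj (\<lambda>p x. T p x - S p x)) S x z"
proof -
  have bD: "bounded_op (\<lambda>p x. T p x - S p x)" using opnorm_diff[OF assms] by simp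
  have "mmult (madj T) (\<lambda>p x. T p x - S p x) x z + mmult (madj (\<lambda>p x. T p x - S p x)) S x z
    = infsum (\<lambda>p. cnj (T p x) * (T p z - S p z) + cnj (T p x - S p x) * S p z) UNIV"
    unfolding mmult_madj
    by (rule infsum_add[symmetric]) (use col_prod_summable[OF assms(1) bD] col_prod_summable[OF bD assms(2)] in auto)
  also have "\<dots> = infsum (\<lambda>p. cnj (T p x) * T p z - cnj (S p x) * S p z) UNIV"
    by (rule infsum_cong) (simp add: algebra_simps)
  also have "\<dots> = mmult (madj T) T x z - mmult (madj S) S x z"
    unfolding mmult_madj
    by (rule infsum_diff2) (use col_prod_summable[OF assms(1,1)] col_prod_summable[OF assms(2,2)] in auto)
  finally show ?thesis by simp
qed

lemma mm_roe:
  fixes T :: "('a \<times> nat) \<Rightarrow> 'a \<Rightarrow> complex"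
  assumes "T \<in> M_Y_d1 d" "is_metric d"
  shows "mmult (madj T) T \<in> uniform_roe d"
proof -
  have bT: "bounded_op T" and ap: "\<And>e. e > 0 \<Longrightarrow> \<exists>S. bounded_op S \<and>
     finite_prop (\<lambda>(y, k) x. d1 d (y, Suc k) (x, 0)) S \<and> opnorm (\<lambda>j i. T j i - S j i) < e"
    using assms(1) unfolding M_Y_d1_def norm_closure_fp_def by auto
  have d0: "\<And>x y. 0 \<le> d x y" and dsym: "\<And>x y. d x y = d y x"
    and dtri: "\<And>x y z. d x z \<le> d x y + d y z" using assms(2) unfolding is_metric_def by auto
  define c where "c = opnorm T"
  have c0: "0 \<le> c" unfolding c_def by (rule opnorm_nonneg[OF bT])
  show ?thesis unfolding uniform_roe_def norm_closure_fp_def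
  proof (intro CollectI conjI allI impI)
    show "bounded_op (mmult (madj T) T)" using mmult_bound[OF bT bT] by simp
    fix e :: real assume e: "e > 0"
    define \<delta> where "\<delta> = min 1 (e / (2 * c + 2))"
    have \<delta>0: "\<delta> > 0" unfolding \<delta>_def using e c0 by simp
    obtain S where S: "bounded_op S" "finite_prop (\<lambda>(y, k) x. d1 d (y, Suc k) (x, 0)) S"
      "opnorm (\<lambda>j i. T j i - S j i) < \<delta>" using ap[OF \<delta>0] by blast
    obtain L where L: "\<And>j i. (\<lambda>(y, k) x. d1 d (y, Suc k) (x, 0)) j i \<ge> L \<Longrightarrow> S j i = 0"
      using S(2) unfolding finite_prop_def by blast
    define D where "D = (\<lambda>p x. T p x - S p x)"
    have bD: "bounded_op D" unfolding D_def using opnorm_diff[OF bT S(1)] by simp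
    define t where "t = opnorm D"
    have t0: "0 \<le> t" unfolding t_def by (rule opnorm_nonneg[OF bD])
    have tl: "t < \<delta>" using S(3) unfolding t_def D_def .
    have nS: "opnorm S \<le> c + t"
    proof -
      have "(\<lambda>j i. T j i - D j i) = S" unfolding D_def by simp
      then show ?thesis using opnorm_diff[OF bT bD] unfolding c_def t_def by simp
    qed
    have m1: "bounded_op (mmult (madj T) D) \<and> opnorm (mmult (madj T) D) \<le> c * t"
      using mmult_bound[OF bT bD] unfolding c_def t_def .
    have m2: "bounded_op (mmult (madj D) S) \<and> opnorm (mmult (madj D) S) \<le> t * opnorm S"
      using mmult_bound[OF bD S(1)] unfolding t_def .
    have eq: "(\<lambda>j i. mmult (madj T) T j i - mmult (madj S) S j i) =
        (\<lambda>j i. mmult (madj T) D j i + mmult (madj D) S j i)"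
      unfolding D_def using mm_decomp[OF bT S(1)] by (simp add: fun_eq_iff)
    have "opnorm (\<lambda>j i. mmult (madj T) T j i - mmult (madj S) S j i) \<le> c * t + t * opnorm S"
      unfolding eq using opnorm_add[of "mmult (madj T) D" "mmult (madj D) S"] m1 m2 by linarith
    also have "\<dots> \<le> c * t + t * (c + t)" using nS t0 by (simp add: mult_left_mono)
    also have "\<dots> \<le> t * (2 * c + 1)"
    proof -
      have "t \<le> 1" using tl unfolding \<delta>_def by simp
      then have "t * t \<le> t" using t0 by (simp add: mult_left_le)
      then show ?thesis by (simp add: algebra_simps)
    qed
    also have "\<dots> < \<delta> * (2 * c + 1)" using tl c0 by simp
    also have "\<dots> \<le> e / (2 * c + 2) * (2 * c + 1)" 
      by (rule mult_right_mono) (use c0 in \<open>auto simp: \<delta>_def\<close>)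
    also have "\<dots> < e" using e c0 by (simp add: field_simps)
    finally have lt: "opnorm (\<lambda>j i. mmult (madj T) T j i - mmult (madj S) S j i) < e" .
    have fp: "finite_prop d (mmult (madj S) S)" unfolding finite_prop_def
    proof (intro exI[of _ "2 * L"] allI impI)
      fix x z assume xz: "2 * L \<le> d x z"
      have nz: "d y x < L" if "S (y, k) x \<noteq> 0" for y k x
      proof (rule ccontr)
        assume "\<not> d y x < L"
        then have "L \<le> (\<lambda>(y, k) x. d1 d (y, Suc k) (x, 0)) (y, k) x" by (simp add: d1_eq)
        then show False using L that by blast
      qed
      have "mmult (madj S) S x z = infsum (\<lambda>p::'a \<times> nat. 0::complex) UNIV" unfolding mmult_madj
      proof (rule infsum_cong)
        fix p :: "'a \<times> nat"
        obtain y k where p: "p = (y, k)" by (cases p)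
        show "cnj (S p x) * S p z = 0"
        proof (rule ccontr)
          assume "cnj (S p x) * S p z \<noteq> 0"
          then have "d y x < L" "d y z < L" using nz unfolding p by auto
          moreover have "d x z \<le> d y x + d y z" using dtri[where x=x and y=y and z=z] dsym[of x y] by simp
          ultimately show False using xz by simp
        qed
      qed
      then show "mmult (madj S) S x z = 0" by simp
    qed
    show "\<exists>S. bounded_op S \<and> finite_prop d S \<and> opnorm (\<lambda>j i. mmult (madj T) T j i - S j i) < e"
      using mmult_bound[OF S(1) S(1)] fp lt by blast
  qed
qed


definition Qm :: "(nat \<Rightarrow> ('a \<Rightarrow> 'a \<Rightarrow> complex)) \<Rightarrow> nat \<Rightarrow> nat \<Rightarrow> ('a \<Rightarrow> 'a \<Rightarrow> complex)" where
  "Qm a N M = (\<lambda>x z. \<Sum>n\<in>{N..<M}. mmult (madj (a n)) (a n) x z)"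

lemma fv_CS: "(cmod (fv X F G w v))\<^sup>2 \<le> nrm2 F w * nrm2 F (app X G v)"
proof -
  have "cmod (fv X F G w v) \<le> (\<Sum>j\<in>F. cmod (w j) * cmod (app X G v j))"
    unfolding fv_app by (rule order_trans[OF norm_sum]) (simp add: norm_mult)
  then have "(cmod (fv X F G w v))\<^sup>2 \<le> (\<Sum>j\<in>F. cmod (w j) * cmod (app X G v j))\<^sup>2"
    by (rule power_mono) simp
  also have "\<dots> \<le> nrm2 F w * nrm2 F (app X G v)" unfolding nrm2_def
    by (rule Cauchy_Schwarz_ineq_sum)
  finally show ?thesis .
qed

lemma tail_sq_bound:
  fixes T :: "('a \<times> nat) \<Rightarrow> 'a \<Rightarrow> complex"
  assumes bs: "\<forall>n. bounded_op (slice T n)" and F: "finite F" and G: "finite G"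
    and FM: "\<forall>p\<in>F. snd p < M"
  shows "nrm2 F (app (tlm N T) G v) \<le> Re (fv (Qm (slice T) N M) G G v v)"
proof -
  define h where "h p = (cmod (app (slice T (snd p)) G v (fst p)))\<^sup>2" for p
  have h0: "\<And>p. 0 \<le> h p" unfolding h_def by simp
  have a: "app (tlm N T) G v p = (if snd p < N then 0 else app (slice T (snd p)) G v (fst p))" for p
    unfolding app_def tlm_def slice_def by auto
  have "nrm2 F (app (tlm N T) G v) = (\<Sum>p\<in>F. if \<not> snd p < N then h p else 0)"
    unfolding nrm2_def a h_def by (rule sum.cong) auto
  also have "\<dots> = (\<Sum>p\<in>{p\<in>F. \<not> snd p < N}. h p)" using F by (simp add: sum.inter_filter)
  also have "\<dots> \<le> (\<Sum>p\<in>fst ` F \<times> {N..<M}. h p)"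
  proof (rule sum_mono2)
    show "finite (fst ` F \<times> {N..<M})" using F by simp
    show "{p \<in> F. \<not> snd p < N} \<subseteq> fst ` F \<times> {N..<M}"
    proof
      fix p assume p: "p \<in> {p \<in> F. \<not> snd p < N}"
      then have "fst p \<in> fst ` F" "snd p \<in> {N..<M}" using FM by auto
      then show "p \<in> fst ` F \<times> {N..<M}" by (cases p) auto
    qed
  qed (simp add: h0)
  also have "\<dots> = (\<Sum>y\<in>fst ` F. \<Sum>n\<in>{N..<M}. h (y, n))"
    by (simp add: sum.cartesian_product)
  also have "\<dots> = (\<Sum>n\<in>{N..<M}. \<Sum>y\<in>fst ` F. h (y, n))"
    by (rule sum.swap)
  also have "\<dots> \<le> (\<Sum>n\<in>{N..<M}. infsum (\<lambda>y. (cmod (app (slice T n) G v y))\<^sup>2) UNIV)"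
  proof (rule sum_mono)
    fix n
    show "(\<Sum>y\<in>fst ` F. h (y, n)) \<le> infsum (\<lambda>y. (cmod (app (slice T n) G v y))\<^sup>2) UNIV"
      unfolding h_def using col_summable[OF spec[OF bs, of n] G, of v] F
      by (simp add: finite_sum_le_infsum)
  qed
  also have "\<dots> = (\<Sum>n\<in>{N..<M}. Re (fv (mmult (madj (slice T n)) (slice T n)) G G v v))"
    using mmult_quad[OF spec[OF bs] G] by simp
  also have "\<dots> = Re (fv (Qm (slice T) N M) G G v v)"
    unfolding Qm_def fv_sum by simp
  finally show ?thesis .
qed

lemma Qm_bounded:
  assumes "\<forall>n. bounded_op (a n)"
  shows "bounded_op (Qm a N M)"
  unfolding Qm_def using opnorm_sum[of "{N..<M}" "\<lambda>n. mmult (madj (a n)) (a n)"] mmult_bound assms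
  by blast

lemma tail_bounded:
  fixes T :: "('a \<times> nat) \<Rightarrow> 'a \<Rightarrow> complex"
  assumes bs: "\<forall>n. bounded_op (slice T n)" and B: "0 \<le> B"
    and ex: "\<forall>M0. \<exists>M\<ge>M0. opnorm (Qm (slice T) N M) \<le> B"
  shows "bounded_op (tlm N T) \<and> opnorm (tlm N T) \<le> sqrt B"
proof (rule bounded_opI)
  fix F :: "('a \<times> nat) set" and G :: "'a set" and w v
  assume h: "finite F" "finite G" "nrm2 F w \<le> 1" "nrm2 G v \<le> 1"
  obtain M where M: "M \<ge> Suc (Max (insert 0 (snd ` F)))" "opnorm (Qm (slice T) N M) \<le> B"
    using ex by blast
  have FM: "\<forall>p\<in>F. snd p < M"
  proof
    fix p assume "p \<in> F"
    then have "snd p \<le> Max (insert 0 (snd ` F))" using h(1) by (intro Max_ge) auto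
    then show "snd p < M" using M(1) by simp
  qed
  note Qb = Qm_bounded[OF bs, of N M]
  have "(cmod (fv (tlm N T) F G w v))\<^sup>2 \<le> nrm2 F w * nrm2 F (app (tlm N T) G v)" by (rule fv_CS)
  also have "\<dots> \<le> 1 * Re (fv (Qm (slice T) N M) G G v v)"
    by (rule mult_mono) (use h tail_sq_bound[OF bs h(1,2) FM, of N v] in \<open>auto simp: nrm2_nonneg\<close>)
  also have "\<dots> \<le> cmod (fv (Qm (slice T) N M) G G v v)" by (simp add: complex_Re_le_cmod)
  also have "\<dots> \<le> opnorm (Qm (slice T) N M) * sqrt (nrm2 G v) * sqrt (nrm2 G v)"
    by (rule bounded_op_bound[OF Qb h(2,2)])
  also have "\<dots> = opnorm (Qm (slice T) N M) * nrm2 G v" using nrm2_nonneg[of G v]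
    by (simp add: mult.assoc)
  also have "\<dots> \<le> B * 1" using M(2) h(4) opnorm_nonneg[OF Qb] nrm2_nonneg[of G v] B
    by (intro mult_mono) auto
  finally show "cmod (fv (tlm N T) F G w v) \<le> sqrt B" by (intro real_le_rsqrt) simp
qed

lemma P_diff:
  fixes f :: "nat \<Rightarrow> complex"
  assumes "N \<le> M"
  shows "(\<Sum>n<M. f n) - (\<Sum>n<N. f n) = (\<Sum>n\<in>{N..<M}. f n)"
  using sum_diff_nat_ivl[of 0 N M f] assms by (simp add: atLeast0LessThan)

lemma Q_bound:
  assumes bs: "\<forall>n. bounded_op (a n)" and bL: "bounded_op L" and NM: "N \<le> M"
  shows "opnorm (Qm a N M) \<le> opnorm (\<lambda>x z. (\<Sum>n<M. mmult (madj (a n)) (a n) x z) - L x z)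
      + opnorm (\<lambda>x z. (\<Sum>n<N. mmult (madj (a n)) (a n) x z) - L x z)"
proof -
  have bP: "bounded_op (\<lambda>x z. \<Sum>n<K. mmult (madj (a n)) (a n) x z)" for K
    using opnorm_sum[of "{..<K}" "\<lambda>n. mmult (madj (a n)) (a n)"] mmult_bound bs by blast
  have e: "Qm a N M = (\<lambda>x z. (\<Sum>n<M. mmult (madj (a n)) (a n) x z) - (\<Sum>n<N. mmult (madj (a n)) (a n) x z))"
    unfolding Qm_def using P_diff[OF NM] by simp
  have b1: "bounded_op (\<lambda>x z. (\<Sum>n<M. mmult (madj (a n)) (a n) x z) - L x z)"
    using opnorm_diff[OF bP bL] by simp
  have b2: "bounded_op (\<lambda>x z. L x z - (\<Sum>n<N. mmult (madj (a n)) (a n) x z))"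
    using opnorm_diff[OF bL bP] by simp
  show ?thesis unfolding e using opnorm_tri[OF b1 b2]
    opnorm_swap[of L "\<lambda>x z. (\<Sum>n<N. mmult (madj (a n)) (a n) x z)"] by simp
qed


lemma cv_main:
  fixes T :: "('a \<times> nat) \<Rightarrow> 'a \<Rightarrow> complex"
  assumes h: "slice T \<in> ell2_module (uniform_roe d)"
  shows "T \<in> M_Y_d1 d"
proof -
  have hs: "\<And>n. slice T n \<in> uniform_roe d" using h unfolding ell2_module_def by blast
  obtain L where L: "L \<in> uniform_roe d"
    "(\<lambda>N. opnorm (\<lambda>x z. (\<Sum>n<N. mmult (madj (slice T n)) (slice T n) x z) - L x z)) \<longlonglongrightarrow> 0"
    using h unfolding ell2_module_def by blast
  define X where "X N = opnorm (\<lambda>x z. (\<Sum>n<N. mmult (madj (slice T n)) (slice T n) x z) - L x z)" for N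
  have bs: "\<forall>n. bounded_op (slice T n)" using hs unfolding uniform_roe_def norm_closure_fp_def by blast
  have bL: "bounded_op L" using L(1) unfolding uniform_roe_def norm_closure_fp_def by blast
  have evt: "\<exists>N0. \<forall>N\<ge>N0. X N < r" if r: "r > 0" for r
  proof -
    obtain N0 where "\<forall>N\<ge>N0. norm (X N - 0) < r" using LIMSEQ_D[OF L(2)[folded X_def] r] by blast
    then have "\<forall>N\<ge>N0. X N < r" by (auto simp: abs_less_iff)
    then show ?thesis by blast
  qed
  have QB: "opnorm (Qm (slice T) N M) \<le> X M + X N" if "N \<le> M" for N M
    unfolding X_def by (rule Q_bound[OF bs bL that])
  have X0: "0 \<le> X N" for N
  proof -
    have bP: "bounded_op (\<lambda>x z. \<Sum>n<N. mmult (madj (slice T n)) (slice T n) x z)"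
      using opnorm_sum[of "{..<N}" "\<lambda>n. mmult (madj (slice T n)) (slice T n)"] mmult_bound bs by blast
    show ?thesis unfolding X_def using opnorm_diff[OF bP bL] opnorm_nonneg by blast
  qed
  have tl0: "tlm 0 T = T" unfolding tlm_def by simp
  have bT: "bounded_op T"
  proof -
    obtain N1 where N1: "\<forall>N\<ge>N1. X N < 1" using evt[of 1] by auto
    have "\<forall>M0. \<exists>M\<ge>M0. opnorm (Qm (slice T) 0 M) \<le> 1 + X 0"
    proof
      fix M0
      have "opnorm (Qm (slice T) 0 (max M0 N1)) \<le> 1 + X 0"
        using QB[of 0 "max M0 N1"] N1[rule_format, of "max M0 N1"] by simp
      then show "\<exists>M\<ge>M0. opnorm (Qm (slice T) 0 M) \<le> 1 + X 0" by (intro exI[of _ "max M0 N1"]) auto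
    qed
    then show ?thesis using tail_bounded[OF bs _, of "1 + X 0" 0] X0[of 0] tl0 by auto
  qed
  show ?thesis unfolding M_Y_d1_def norm_closure_fp_def
  proof (intro CollectI conjI allI impI bT)
    fix e :: real assume e: "e > 0"
    define r where "r = e\<^sup>2 / 16"
    have r0: "r > 0" unfolding r_def using e by simp
    obtain N where N: "\<forall>M\<ge>N. X M < r" using evt[OF r0] by blast
    have "\<forall>M0. \<exists>M\<ge>M0. opnorm (Qm (slice T) N M) \<le> 2 * r"
    proof
      fix M0
      have "opnorm (Qm (slice T) N (max M0 N)) \<le> 2 * r"
        using QB[of N "max M0 N"] N[rule_format, of "max M0 N"] N[rule_format, of N] by simp
      then show "\<exists>M\<ge>M0. opnorm (Qm (slice T) N M) \<le> 2 * r" by (intro exI[of _ "max M0 N"]) auto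
    qed
    then have tb: "bounded_op (tlm N T) \<and> opnorm (tlm N T) \<le> sqrt (2 * r)"
      using tail_bounded[OF bs, of "2 * r" N] r0 by auto
    have sq: "sqrt (2 * r) < e / 2"
    proof -
      have "2 * r < (e / 2)\<^sup>2" unfolding r_def using e by (simp add: power_divide)
      then have "sqrt (2 * r) < sqrt ((e / 2)\<^sup>2)" by (rule real_sqrt_less_mono)
      then show ?thesis using e by simp
    qed
    define \<delta> where "\<delta> = e / (2 * (real N + 1))"
    have \<delta>0: "\<delta> > 0" unfolding \<delta>_def using e by simp
    have "\<forall>n. \<exists>S. bounded_op S \<and> finite_prop d S \<and> opnorm (\<lambda>j i. slice T n j i - S j i) < \<delta>"
      using hs \<delta>0 unfolding uniform_roe_def norm_closure_fp_def by blast
    then obtain S where S: "\<And>n. bounded_op (S n)" "\<And>n. finite_prop d (S n)"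
      "\<And>n. opnorm (\<lambda>j i. slice T n j i - S n j i) < \<delta>" by metis
    have "\<forall>n. \<exists>Ln. \<forall>j i. d j i \<ge> Ln \<longrightarrow> S n j i = 0" using S(2) unfolding finite_prop_def by blast
    then obtain Lf where Lf: "\<And>n j i. d j i \<ge> Lf n \<Longrightarrow> S n j i = 0" by metis
    define S' where "S' = (\<lambda>p x. \<Sum>k\<in>{..<N}. emb k (S k) p x)"
    have S'eq: "S' (y, m) x = (if m < N then S m y x else 0)" for y m x
      unfolding S'_def emb_def by simp
    have bS': "bounded_op S'" unfolding S'_def
      using opnorm_sum[of "{..<N}" "\<lambda>k. emb k (S k)"] emb_bounded S(1) by blast
    have fp: "finite_prop (\<lambda>(y, k) x. d1 d (y, Suc k) (x, 0)) S'" unfolding finite_prop_def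
    proof (intro exI[of _ "real N + (\<Sum>k<N. \<bar>Lf k\<bar>)"] allI impI)
      fix p :: "'a \<times> nat" and x :: 'a
      obtain y m where p: "p = (y, m)" by (cases p)
      assume "real N + (\<Sum>k<N. \<bar>Lf k\<bar>) \<le> (\<lambda>(y, k) x. d1 d (y, Suc k) (x, 0)) p x"
      then have le: "real N + (\<Sum>k<N. \<bar>Lf k\<bar>) \<le> d y x + real m + 1" unfolding p by (simp add: d1_eq)
      show "S' p x = 0"
      proof (cases "m < N")
        case True
        have "\<bar>Lf m\<bar> \<le> (\<Sum>k<N. \<bar>Lf k\<bar>)" using True by (intro member_le_sum) auto
        then have "Lf m \<le> d y x" using le True by linarith
        then show ?thesis unfolding p S'eq using Lf by simp
      qed (simp add: p S'eq)
    qed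
    define E where "E k = (\<lambda>y x. slice T k y x - S k y x)" for k
    have bE: "bounded_op (E k) \<and> opnorm (E k) < \<delta>" for k
      unfolding E_def using opnorm_diff[OF spec[OF bs, of k] S(1)] S(3)[of k] by simp
    have dec: "(\<lambda>j i. T j i - S' j i) = (\<lambda>j i. tlm N T j i + (\<Sum>k\<in>{..<N}. emb k (E k) j i))"
    proof (intro ext)
      fix p :: "'a \<times> nat" and x :: 'a
      obtain y m where p: "p = (y, m)" by (cases p)
      show "T p x - S' p x = tlm N T p x + (\<Sum>k\<in>{..<N}. emb k (E k) p x)"
        unfolding p S'eq by (simp add: tlm_def emb_def E_def slice_def)
    qed
    have sb: "bounded_op (\<lambda>j i. \<Sum>k\<in>{..<N}. emb k (E k) j i) \<and>
        opnorm (\<lambda>j i. \<Sum>k\<in>{..<N}. emb k (E k) j i) \<le> (\<Sum>k\<in>{..<N}. opnorm (emb k (E k)))"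
      using opnorm_sum[of "{..<N}" "\<lambda>k. emb k (E k)"] emb_bounded bE by blast
    have "(\<Sum>k\<in>{..<N}. opnorm (emb k (E k))) \<le> (\<Sum>k\<in>{..<N}. \<delta>)"
    proof (intro sum_mono)
      fix k show "opnorm (emb k (E k)) \<le> \<delta>"
        using emb_bounded[of "E k" k] bE[of k] by linarith
    qed
    also have "\<dots> = real N * \<delta>" by simp
    also have "\<dots> < e / 2" unfolding \<delta>_def using e by (simp add: field_simps)
    finally have s2: "opnorm (\<lambda>j i. \<Sum>k\<in>{..<N}. emb k (E k) j i) < e / 2" using sb by linarith
    have "opnorm (\<lambda>j i. T j i - S' j i) \<le> opnorm (tlm N T) + opnorm (\<lambda>j i. \<Sum>k\<in>{..<N}. emb k (E k) j i)"
      unfolding dec using opnorm_add tb sb by blast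
    then have "opnorm (\<lambda>j i. T j i - S' j i) < e" using tb sq s2 by linarith
    then show "\<exists>S. bounded_op S \<and> finite_prop (\<lambda>(y, k) x. d1 d (y, Suc k) (x, 0)) S \<and>
         opnorm (\<lambda>j i. T j i - S j i) < e" using bS' fp by blast
  qed
qed

theorem mainTheorem9:
  fixes d :: "'a::countable \<Rightarrow> 'a \<Rightarrow> real"
  assumes "is_metric d" and "discrete_metric d"
  shows "\<forall>T :: ('a \<times> nat) \<Rightarrow> 'a \<Rightarrow> complex.
           T \<in> M_Y_d1 d \<longleftrightarrow> slice T \<in> ell2_module (uniform_roe d)"
proof (intro allI iffI)
  fix T :: "('a \<times> nat) \<Rightarrow> 'a \<Rightarrow> complex"
  assume T: "T \<in> M_Y_d1 d"
  show "slice T \<in> ell2_module (uniform_roe d)" unfolding ell2_module_def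
  proof (intro CollectI conjI allI bexI)
    show "\<And>n. slice T n \<in> uniform_roe d" by (rule slice_roe[OF T assms(1)])
    show "mmult (madj T) T \<in> uniform_roe d" by (rule mm_roe[OF T assms(1)])
    show "(\<lambda>N. opnorm (\<lambda>x z. (\<Sum>n<N. mmult (madj (slice T n)) (slice T n) x z) - mmult (madj T) T x z)) \<longlonglongrightarrow> 0"
      by (rule fw_conv[OF T assms(1)])
  qed
next
  fix T :: "('a \<times> nat) \<Rightarrow> 'a \<Rightarrow> complex"
  assume "slice T \<in> ell2_module (uniform_roe d)"
  then show "T \<in> M_Y_d1 d" by (rule cv_main)
qed

end
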